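(* Let $\alpha\in(0,1/2)$ be sufficiently small (depending only on $w$), set $I_\alpha=p(1-\alpha)-p(\alpha)=2\int_\alpha^{1-\alpha}\sqrt{w(t)}\,dt$, and let $C$ satisfy $p(1)<C<\tfrac32 I_\alpha$. Then there is a constant $\bar C>0$, depending only on $C$ (and on $w$, $\alpha$, $\bar v$), with the following property: for every $\delta\in(0,1]$ and every $\xi\in A_\delta$ with $E_\delta[\xi]\le C$, there exists $\bar a\in\delta\mathbb{Z}$ such that the translate $\xi_{\bar a}(x):=\xi(x+\bar a)$ satisfies $$\|\xi_{\bar a}-\bar v\|_{L^2(\mathbb{R})}\le \bar C.$$
   Context: Let $w:\mathbb{R}\to\mathbb{R}$ be a function with continuous third derivative, periodic with period $1$, with $w(z)=0$ for all $z\in\mathbb{Z}$, $w(\xi)>0$ for $\xi\notin\mathbb{Z}$, $w''(z)>0$ for all $z\in\mathbb{Z}$, and $w(1-\xi)=w(\xi)$ for all $\xi$. Let $p(z)=2\int_0^z\sqrt{w(t)}\,dt$. Let $\bar v:\mathbb{R}\to\mathbb{R}$ be continuously differentiable and strictly increasing with $\bar v(x)\to0$ as $x\to-\infty$, $\bar v(x)\to1$ as $x\to\infty$, $1-\bar v\in L^1([0,\infty))\cap L^2([0,\infty))$, $\bar v\in L^1((-\infty,0])\cap L^2((-\infty,0])$, $\bar v'\in L^1(\mathbb{R})\cap L^2(\mathbb{R})$. Let $A=\{\xi:\xi-\bar v\in H^1(\mathbb{R})\}$. For $\delta>0$, $P_\delta=\{i\delta:i\in\mathbb{Z}\}$ and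 $A_\delta$ is the set of continuous $\xi\in A$ that are affine on each interval $[(i-1)\delta,i\delta]$, $i\in\mathbb{Z}$. Define $E_\delta:A\to[0,\infty]$ by $E_\delta[\xi]=\int_{-\infty}^\infty\xi'(x)^2\,dx+\int_{-\infty}^\infty w(\xi(x))\,dx$ if $\xi\in A_\delta$ and $E_\delta[\xi]=\infty$ otherwise. *)

theory Defs
  imports "HOL-Analysis.Analysis"
begin

definition well_potential :: "(real \<Rightarrow> real) \<Rightarrow> bool" where
  "well_potential w \<longleftrightarrow>
     (\<exists>w1 w2 w3. (\<forall>x. (w has_real_derivative w1 x) (at x)) \<and>
                 (\<forall>x. (w1 has_real_derivative w2 x) (at x)) \<and>
                 (\<forall>x. (w2 has_real_derivative w3 x) (at x)) \<and>
                 continuous_on UNIV w3 \<and>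
                 (\<forall>z\<in>\<int>. w2 z > 0)) \<and>
     (\<forall>x. w (x + 1) = w x) \<and>
     (\<forall>z\<in>\<int>. w z = 0) \<and>
     (\<forall>x. x \<notin> \<int> \<longrightarrow> w x > 0) \<and>
     (\<forall>x. w (1 - x) = w x)"

text \<open>p(z) = 2 \<integral>_0^z sqrt(w(t)) dt (only used for z \<ge> 0).\<close>
definition pfun :: "(real \<Rightarrow> real) \<Rightarrow> real \<Rightarrow> real" where
  "pfun w z = 2 * integral {0..z} (\<lambda>t. sqrt (w t))"

definition profile :: "(real \<Rightarrow> real) \<Rightarrow> bool" where
  "profile v \<longleftrightarrow>
     (\<exists>v'. (\<forall>x. (v has_real_derivative v' x) (at x)) \<and> continuous_on UNIV v' \<and>
           integrable lborel v' \<and> integrable lborel (\<lambda>x. (v' x)\<^sup>2)) \<and>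
     strict_mono v \<and>
     (v \<longlongrightarrow> 0) at_bot \<and> (v \<longlongrightarrow> 1) at_top \<and>
     set_integrable lborel {0..} (\<lambda>x. 1 - v x) \<and>
     set_integrable lborel {0..} (\<lambda>x. (1 - v x)\<^sup>2) \<and>
     set_integrable lborel {..0} v \<and>
     set_integrable lborel {..0} (\<lambda>x. (v x)\<^sup>2)"

definition test_fun :: "(real \<Rightarrow> real) \<Rightarrow> bool" where
  "test_fun \<phi> \<longleftrightarrow> (\<forall>n x. ((deriv ^^ n) \<phi>) differentiable (at x)) \<and>
                    (\<exists>R. \<forall>x. \<bar>x\<bar> > R \<longrightarrow> \<phi> x = 0)"

definition H1 :: "(real \<Rightarrow> real) \<Rightarrow> bool" where
  "H1 f \<longleftrightarrow> f \<in> borel_measurable lborel \<and> integrable lborel (\<lambda>x. (f x)\<^sup>2) \<and>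
     (\<exists>g. g \<in> borel_measurable lborel \<and> integrable lborel (\<lambda>x. (g x)\<^sup>2) \<and>
          (\<forall>\<phi>. test_fun \<phi> \<longrightarrow>
             (\<integral>x. f x * deriv \<phi> x \<partial>lborel) = - (\<integral>x. g x * \<phi> x \<partial>lborel)))"

definition Aset :: "(real \<Rightarrow> real) \<Rightarrow> (real \<Rightarrow> real) set" where
  "Aset v = {\<xi>. H1 (\<lambda>x. \<xi> x - v x)}"

definition Adelta :: "(real \<Rightarrow> real) \<Rightarrow> real \<Rightarrow> (real \<Rightarrow> real) set" where
  "Adelta v \<delta> = {\<xi>. \<xi> \<in> Aset v \<and> continuous_on UNIV \<xi> \<and>
     (\<forall>i::int. \<exists>a b. \<forall>x\<in>{(of_int i - 1) * \<delta> .. of_int i * \<delta>}. \<xi> x = a * x + b)}"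

text \<open>E_delta with values in [0,\<infinity>]; the derivative of a piecewise affine function
  exists off the (null) grid, so the classical derivative is used a.e.\<close>
definition Edelta :: "(real \<Rightarrow> real) \<Rightarrow> (real \<Rightarrow> real) \<Rightarrow> real \<Rightarrow> (real \<Rightarrow> real) \<Rightarrow> ennreal" where
  "Edelta w v \<delta> \<xi> = (if \<xi> \<in> Adelta v \<delta>
      then (\<integral>\<^sup>+x. ennreal ((deriv \<xi> x)\<^sup>2) \<partial>lborel) + (\<integral>\<^sup>+x. ennreal (w (\<xi> x)) \<partial>lborel)
      else \<infinity>)"

end

theory Submission
  imports Defs
begin


lemma hk_bound_nn:
  fixes f g :: "real \<Rightarrow> real"
  assumes fm: "f \<in> borel_measurable borel" and gm: "g \<in> borel_measurable borel"
    and fg: "\<And>x. \<bar>g x\<bar> \<le> f x" and gi: "(g has_integral I) {a..b}"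
  shows "ennreal \<bar>I\<bar> \<le> (\<integral>\<^sup>+x. ennreal (indicator {a..b} x * f x) \<partial>lborel)"
proof (cases "(\<integral>\<^sup>+x. ennreal (indicator {a..b} x * f x) \<partial>lborel) = \<infinity>")
  case True then show ?thesis by simp
next
  case False
  define F where "F x = indicator {a..b} x * f x" for x
  define G where "G x = indicator {a..b} x * g x" for x
  have f0: "0 \<le> f x" for x using fg[of x] by linarith
  have F0: "0 \<le> F x" for x using f0 by (simp add: F_def)
  have Fm: "F \<in> borel_measurable lborel" unfolding F_def using fm by measurable
  have Gm: "G \<in> borel_measurable lborel" unfolding G_def using gm by measurable
  have Fi: "integrable lborel F"
    apply (rule integrableI_bounded[OF Fm])
    using False F0 by (simp add: F_def[symmetric] less_top)
  have Gi: "integrable lborel G"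
    apply (rule Bochner_Integration.integrable_bound[OF Fi Gm])
    using fg F0 by (auto simp: F_def G_def indicator_def)
  have "(G has_integral (\<integral>x. G x \<partial>lborel)) UNIV" by (rule has_integral_integral_real[OF Gi])
  moreover have "(G has_integral I) UNIV"
  proof -
    have "((\<lambda>x. if x \<in> {a..b} then g x else 0) has_integral I) UNIV"
      using gi has_integral_restrict_UNIV by blast
    moreover have "(\<lambda>x. if x \<in> {a..b} then g x else 0) = G" by (auto simp: G_def indicator_def)
    ultimately show ?thesis by simp
  qed
  ultimately have IG: "I = (\<integral>x. G x \<partial>lborel)" using has_integral_unique by blast
  have "\<bar>I\<bar> \<le> (\<integral>x. F x \<partial>lborel)"
    unfolding IG by (rule integral_abs_bound_integral[OF Gi Fi]) (use fg in \<open>auto simp: F_def G_def indicator_def\<close>)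
  then have "ennreal \<bar>I\<bar> \<le> ennreal (\<integral>x. F x \<partial>lborel)" by simp
  also have "\<dots> = (\<integral>\<^sup>+x. ennreal (F x) \<partial>lborel)"
    by (rule nn_integral_eq_integral[symmetric]) (use Fi F0 in auto)
  finally show ?thesis by (simp add: F_def)
qed



definition slope :: "(real\<Rightarrow>real) \<Rightarrow> real \<Rightarrow> real \<Rightarrow> real" where
  "slope \<xi> \<delta> x = (\<xi> ((of_int \<lfloor>x/\<delta>\<rfloor> + 1)*\<delta>) - \<xi> (of_int \<lfloor>x/\<delta>\<rfloor> * \<delta>))/\<delta>"

lemma slope_meas:
  assumes "continuous_on UNIV \<xi>"
  shows "slope \<xi> \<delta> \<in> borel_measurable borel"
proof -
  have [measurable]: "\<xi> \<in> borel_measurable borel" using assms borel_measurable_continuous_onI by blast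
  show ?thesis unfolding slope_def by measurable
qed

lemma pa_deriv:
  assumes d: "\<delta> > 0"
    and aff: "\<forall>i::int. \<exists>a b. \<forall>x\<in>{(of_int i - 1) * \<delta> .. of_int i * \<delta>}. \<xi> x = a * x + b"
    and x: "x \<notin> range (\<lambda>i::int. of_int i * \<delta>)"
  shows "(\<xi> has_real_derivative slope \<xi> \<delta> x) (at x)"
proof -
  define m where "m = \<lfloor>x/\<delta>\<rfloor>"
  have "of_int m \<le> x/\<delta>" "x/\<delta> < of_int m + 1" unfolding m_def by linarith+
  then have l: "of_int m * \<delta> \<le> x" and r: "x < (of_int m + 1) * \<delta>" using d by (auto simp: field_simps)
  have "x \<noteq> of_int m * \<delta>" using x by auto
  with l have l': "of_int m * \<delta> < x" by simp
  obtain a b where ab: "\<forall>y\<in>{(of_int (m+1) - 1) * \<delta> .. of_int (m+1) * \<delta>}. \<xi> y = a * y + b"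
    using aff by blast
  then have ab': "\<And>y. y \<in> {of_int m * \<delta> .. (of_int m + 1) * \<delta>} \<Longrightarrow> \<xi> y = a * y + b" by simp
  have "slope \<xi> \<delta> x = ((a * ((of_int m + 1)*\<delta>) + b) - (a * (of_int m * \<delta>) + b))/\<delta>"
    unfolding slope_def m_def[symmetric] using ab'[of "(of_int m + 1)*\<delta>"] ab'[of "of_int m * \<delta>"] d
    by (simp add: field_simps)
  also have "\<dots> = a" using d by (simp add: field_simps)
  finally have sl: "slope \<xi> \<delta> x = a" .
  have "((\<lambda>y. a * y + b) has_real_derivative a) (at x)"
    by (auto intro!: derivative_eq_intros)
  then show ?thesis unfolding sl
    by (rule has_field_derivative_transform_within_open[where S="{of_int m * \<delta> <..< (of_int m + 1) * \<delta>}"])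
       (use l' r ab' in auto)
qed

lemma grid_finite:
  fixes \<delta> a b :: real
  assumes d: "\<delta> > 0"
  shows "finite (range (\<lambda>i::int. of_int i * \<delta>) \<inter> {a..b})"
proof -
  have "range (\<lambda>i::int. of_int i * \<delta>) \<inter> {a..b} \<subseteq> (\<lambda>i::int. of_int i * \<delta>) ` {\<lceil>a/\<delta>\<rceil>..\<lfloor>b/\<delta>\<rfloor>}"
  proof
    fix y assume "y \<in> range (\<lambda>i::int. of_int i * \<delta>) \<inter> {a..b}"
    then obtain i where y: "y = of_int i * \<delta>" "a \<le> of_int i * \<delta>" "of_int i * \<delta> \<le> b" by auto
    then have "a/\<delta> \<le> of_int i" "of_int i \<le> b/\<delta>" using d by (auto simp: field_simps)
    then have "i \<in> {\<lceil>a/\<delta>\<rceil>..\<lfloor>b/\<delta>\<rfloor>}" by (simp add: ceiling_le le_floor_iff)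
    then show "y \<in> (\<lambda>i::int. of_int i * \<delta>) ` {\<lceil>a/\<delta>\<rceil>..\<lfloor>b/\<delta>\<rfloor>}" using y by auto
  qed
  then show ?thesis by (rule finite_subset) simp
qed



lemma energy_interval:
  fixes \<xi> w :: "real \<Rightarrow> real" and \<delta> a b :: real
  assumes d: "\<delta> > 0"
    and aff: "\<forall>i::int. \<exists>a b. \<forall>x\<in>{(of_int i - 1) * \<delta> .. of_int i * \<delta>}. \<xi> x = a * x + b"
    and xc: "continuous_on UNIV \<xi>"
    and wc: "continuous_on UNIV w" and w0: "\<And>x. 0 \<le> w x"
    and ab: "a \<le> b"
  shows "ennreal (integral {min (\<xi> a) (\<xi> b)..max (\<xi> a) (\<xi> b)} (\<lambda>t. 2 * sqrt (w t)))
    \<le> (\<integral>\<^sup>+x. ennreal (indicator {a..b} x * ((slope \<xi> \<delta> x)\<^sup>2 + w (\<xi> x))) \<partial>lborel)"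
proof -
  define f where "f t = 2 * sqrt (w t)" for t
  have fc: "continuous_on UNIV f" unfolding f_def by (intro continuous_intros wc)
  have f0: "0 \<le> f t" for t by (simp add: f_def w0)
  have "compact (\<xi> ` {a..b})" by (rule compact_continuous_image[OF continuous_on_subset[OF xc]]) auto
  then have "bounded (\<xi> ` {a..b})" by (rule compact_imp_bounded)
  then obtain B where "\<forall>y\<in>\<xi> ` {a..b}. \<bar>y\<bar> \<le> B" using bounded_real by metis
  then have B: "\<And>x. x \<in> {a..b} \<Longrightarrow> \<bar>\<xi> x\<bar> \<le> B" by blast
  define L where "L = -B-1"
  define Q where "Q z = integral {L..z} f" for z
  have Qd: "(Q has_real_derivative f z) (at z)" if "\<bar>z\<bar> \<le> B" for z
  proof -
    have "(Q has_real_derivative f z) (at z within {L..B+1})"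
      unfolding Q_def
    proof (rule integral_has_real_derivative)
      show "continuous_on {L..B + 1} f" by (rule continuous_on_subset[OF fc]) simp
      show "z \<in> {L..B+1}" using that unfolding L_def by (simp add: abs_le_iff)
    qed
    moreover have "z \<in> interior {L..B+1}" using that unfolding L_def by (simp add: abs_le_iff)
    ultimately show ?thesis by (metis at_within_interior)
  qed
  define g where "g x = f (\<xi> x) * slope \<xi> \<delta> x" for x
  define G where "G = range (\<lambda>i::int. of_int i * \<delta>) \<inter> {a..b}"
  have Gf: "finite G" unfolding G_def by (rule grid_finite[OF d])
  have "(g has_integral ((Q \<circ> \<xi>) b - (Q \<circ> \<xi>) a)) {a..b}"
  proof (rule fundamental_theorem_of_calculus_interior_strong[OF Gf ab])
    fix x assume x: "x \<in> {a<..<b} - G"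
    then have "x \<notin> range (\<lambda>i::int. of_int i * \<delta>)" unfolding G_def by auto
    then have xd: "(\<xi> has_real_derivative slope \<xi> \<delta> x) (at x)" by (rule pa_deriv[OF d aff])
    have "((Q \<circ> \<xi>) has_real_derivative f (\<xi> x) * slope \<xi> \<delta> x) (at x)"
      by (rule DERIV_chain[OF Qd xd]) (use B x in auto)
    then show "((Q \<circ> \<xi>) has_vector_derivative g x) (at x)"
      by (simp add: g_def has_real_derivative_iff_has_vector_derivative)
  next
    show "continuous_on {a..b} (Q \<circ> \<xi>)"
    proof (rule continuous_at_imp_continuous_on, rule ballI)
      fix x assume x: "x \<in> {a..b}"
      have "isCont \<xi> x" using xc by (simp add: continuous_on_eq_continuous_at)
      moreover have "isCont Q (\<xi> x)" using Qd[of "\<xi> x"] B[OF x] DERIV_isCont by blast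
      ultimately show "isCont (Q \<circ> \<xi>) x" by (rule continuous_at_compose)
    qed
  qed
  then have gi: "(g has_integral (Q (\<xi> b) - Q (\<xi> a))) {a..b}" by simp
  have xm[measurable]: "\<xi> \<in> borel_measurable borel" using xc borel_measurable_continuous_onI by blast
  have wm[measurable]: "w \<in> borel_measurable borel" using wc borel_measurable_continuous_onI by blast
  have sm[measurable]: "slope \<xi> \<delta> \<in> borel_measurable borel" by (rule slope_meas[OF xc])
  have hm: "(\<lambda>x. (slope \<xi> \<delta> x)\<^sup>2 + w (\<xi> x)) \<in> borel_measurable borel" by measurable
  have gm: "g \<in> borel_measurable borel" unfolding g_def f_def by measurable
  have gh: "\<bar>g x\<bar> \<le> (slope \<xi> \<delta> x)\<^sup>2 + w (\<xi> x)" for x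
  proof -
    define s where "s = \<bar>slope \<xi> \<delta> x\<bar>"
    define r where "r = sqrt (w (\<xi> x))"
    have "r\<^sup>2 = w (\<xi> x)" unfolding r_def using w0 by simp
    moreover have "\<bar>g x\<bar> = 2 * r * s" unfolding g_def f_def r_def s_def by (simp add: abs_mult w0)
    moreover have "s\<^sup>2 = (slope \<xi> \<delta> x)\<^sup>2" unfolding s_def by simp
    moreover have "0 \<le> (r - s)\<^sup>2" by simp
    ultimately show ?thesis by (simp add: power2_eq_square algebra_simps)
  qed
  have main: "ennreal \<bar>Q (\<xi> b) - Q (\<xi> a)\<bar> \<le> (\<integral>\<^sup>+x. ennreal (indicator {a..b} x * ((slope \<xi> \<delta> x)\<^sup>2 + w (\<xi> x))) \<partial>lborel)"
    by (rule hk_bound_nn[OF hm gm gh gi])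
  have Qdiff: "Q t - Q s = integral {s..t} f" if "s \<le> t" "\<bar>s\<bar> \<le> B" "\<bar>t\<bar> \<le> B" for s t
  proof -
    have "f integrable_on {L..t}"
      by (rule integrable_continuous_interval) (rule continuous_on_subset[OF fc], simp)
    then have "integral {L..s} f + integral {s..t} f = integral {L..t} f"
      by (rule Henstock_Kurzweil_Integration.integral_combine[rotated 2])
         (use that in \<open>simp_all add: L_def abs_le_iff\<close>)
    then show ?thesis unfolding Q_def by simp
  qed
  have ia: "\<bar>\<xi> a\<bar> \<le> B" "\<bar>\<xi> b\<bar> \<le> B" using B ab by auto
  have "\<bar>Q (\<xi> b) - Q (\<xi> a)\<bar> = integral {min (\<xi> a) (\<xi> b)..max (\<xi> a) (\<xi> b)} f"
  proof (cases "\<xi> a \<le> \<xi> b")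
    case True
    have "0 \<le> integral {\<xi> a..\<xi> b} f"
      by (rule integral_nonneg) (auto intro!: integrable_continuous_interval f0 continuous_on_subset[OF fc])
    then show ?thesis using Qdiff[OF True ia] True by simp
  next
    case False
    then have F: "\<xi> b \<le> \<xi> a" by simp
    have "0 \<le> integral {\<xi> b..\<xi> a} f"
      by (rule integral_nonneg) (auto intro!: integrable_continuous_interval f0 continuous_on_subset[OF fc])
    then show ?thesis using Qdiff[OF F ia(2) ia(1)] F by simp
  qed
  then show ?thesis using main unfolding f_def by simp
qed



lemma wp_basic:
  assumes "well_potential w"
  shows "continuous_on UNIV w" "\<And>x. 0 \<le> w x" "\<And>x. w (x + 1) = w x" "\<And>x. w (1 - x) = w x"
proof -
  from assms obtain w1 where "\<forall>x. (w has_real_derivative w1 x) (at x)"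
    unfolding well_potential_def by blast
  then show "continuous_on UNIV w"
    by (meson DERIV_isCont continuous_at_imp_continuous_on)
  show "\<And>x. w (x + 1) = w x" "\<And>x. w (1 - x) = w x" using assms unfolding well_potential_def by auto
  show "0 \<le> w x" for x
  proof (cases "x \<in> \<int>")
    case True then show ?thesis using assms unfolding well_potential_def by auto
  next
    case False then show ?thesis using assms unfolding well_potential_def by force
  qed
qed

lemma w_coercive:
  assumes wp: "well_potential w" and a0: "0 < \<alpha>" and a1: "\<alpha> < 1"
  shows "\<exists>K>0. \<forall>z\<in>{\<alpha>..2-\<alpha>}. (z-1)\<^sup>2 \<le> K * w z"
proof -
  obtain w1 w2 w3 where d1: "\<And>x. (w has_real_derivative w1 x) (at x)"
    and d2: "\<And>x. (w1 has_real_derivative w2 x) (at x)"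
    and d3: "\<And>x. (w2 has_real_derivative w3 x) (at x)"
    and pos2: "\<forall>z\<in>\<int>. w2 z > 0"
    using wp unfolding well_potential_def by blast
  have w0: "\<And>x. 0 \<le> w x" and wc: "continuous_on UNIV w" using wp_basic[OF wp] by auto
  have w1z: "w 1 = 0" using wp unfolding well_potential_def by auto
  have pos: "w x > 0" if "x \<notin> \<int>" for x using wp that unfolding well_potential_def by auto
  have w11: "w1 1 = 0"
    by (rule DERIV_local_min[OF d1[of 1], of 1]) (use w0 w1z in auto)
  have c2: "w2 1 > 0" using pos2 by auto
  have "isCont w2 1" using d3 DERIV_isCont by blast
  then have "(w2 \<longlongrightarrow> w2 1) (at 1)" by (simp add: isCont_def)
  moreover have "w2 1 / 2 < w2 1" using c2 by simp
  ultimately have "eventually (\<lambda>x. w2 1 / 2 < w2 x) (at 1)" by (rule order_tendstoD)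
  then obtain \<rho> where rho: "\<rho> > 0" and rhoP: "\<And>x. x \<noteq> 1 \<Longrightarrow> dist x 1 < \<rho> \<Longrightarrow> w2 1 / 2 < w2 x"
    unfolding eventually_at by blast
  have rhoP': "w2 1 / 2 < w2 x" if "\<bar>x - 1\<bar> < \<rho>" for x
    using rhoP[of x] that c2 by (cases "x = 1") (auto simp: dist_real_def)
  define r where "r = \<rho> / 2"
  have r0: "r > 0" "r < \<rho>" using rho by (auto simp: r_def)
  define diff where "diff m = (if m = 0 then w else if m = 1 then w1 else w2)" for m :: nat
  have near: "w2 1 / 4 * (z-1)\<^sup>2 \<le> w z" if z: "\<bar>z - 1\<bar> \<le> r" for z
  proof (cases "z = 1")
    case True then show ?thesis using w1z by simp
  next
    case False
    have "\<exists>t. (if z < 1 then z < t \<and> t < 1 else 1 < t \<and> t < z) \<and>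
      w z = (\<Sum>m<2. (diff m 1 / fact m) * (z - 1)^m) + (diff 2 t / fact 2) * (z - 1)^2"
    proof (rule Taylor[where a="1-r" and b="1+r"])
      show "\<forall>m t. m < 2 \<and> 1 - r \<le> t \<and> t \<le> 1 + r \<longrightarrow> DERIV (diff m) t :> diff (Suc m) t"
        using d1 d2 by (auto simp: diff_def less_2_cases_iff)
    qed (use z False r0 in \<open>auto simp: diff_def abs_le_iff\<close>)
    then obtain t where tt: "(if z < 1 then z < t \<and> t < 1 else 1 < t \<and> t < z)"
      and eq0: "w z = (\<Sum>m<2. (diff m 1 / fact m) * (z - 1)^m) + (diff 2 t / fact 2) * (z - 1)^2"
      by blast
    have t: "\<bar>t - 1\<bar> \<le> \<bar>z - 1\<bar>" using tt by (auto split: if_splits)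
    have eq: "w z = w 1 + w1 1 * (z-1) + w2 t / 2 * (z-1)\<^sup>2"
      using eq0 by (simp add: diff_def numeral_2_eq_2 power2_eq_square)
    have "w2 1 / 2 < w2 t" using t z r0 by (intro rhoP') auto
    then have "w2 1 / 4 * (z-1)\<^sup>2 \<le> w2 t / 2 * (z-1)\<^sup>2"
      by (intro mult_right_mono) auto
    then show ?thesis using eq w1z w11 by simp
  qed
  define S where "S = {\<alpha>..1-r} \<union> {1+r..2-\<alpha>}"
  have Sc: "compact S" unfolding S_def by auto
  have Spos: "w z > 0" if "z \<in> S" for z
  proof (rule pos, rule notI)
    assume "z \<in> \<int>"
    then obtain n where n: "z = of_int n" by (auto elim: Ints_cases)
    have "0 < z" "z < 2" "z \<noteq> 1" using that a0 a1 r0 unfolding S_def by auto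
    then have "0 < n" "n < 2" "n \<noteq> 1" unfolding n by auto
    then show False by simp
  qed
  obtain m where m0: "m > 0" and mS: "\<And>z. z \<in> S \<Longrightarrow> m \<le> w z"
  proof (cases "S = {}")
    case True then show ?thesis using that[of 1] by auto
  next
    case False
    obtain x0 where "x0 \<in> S" "\<forall>y\<in>S. w x0 \<le> w y"
      using continuous_attains_inf[OF Sc False continuous_on_subset[OF wc]] by auto
    then show ?thesis using that[of "w x0"] Spos by auto
  qed
  define K where "K = max (4 / w2 1) (1 / m)"
  have K0: "K > 0" using m0 unfolding K_def by (simp add: less_max_iff_disj)
  show ?thesis
  proof (intro exI conjI ballI)
    show "K > 0" by (rule K0)
    fix z assume z: "z \<in> {\<alpha>..2-\<alpha>}"
    show "(z-1)\<^sup>2 \<le> K * w z"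
    proof (cases "\<bar>z - 1\<bar> \<le> r")
      case True
      have "(z-1)\<^sup>2 \<le> (4 / w2 1) * w z" using near[OF True] c2 by (simp add: field_simps)
      also have "\<dots> \<le> K * w z" by (intro mult_right_mono) (auto simp: K_def w0)
      finally show ?thesis .
    next
      case False
      then have zS: "z \<in> S" using z unfolding S_def by auto
      have "\<bar>z - 1\<bar> \<le> 1" using z a0 a1 by auto
      then have "\<bar>z-1\<bar>\<^sup>2 \<le> 1" by (intro power_le_one) auto
      then have "(z-1)\<^sup>2 \<le> 1" by simp
      also have "1 \<le> (1/m) * w z" using mS[OF zS] m0 by (simp add: field_simps)
      also have "\<dots> \<le> K * w z" by (intro mult_right_mono) (auto simp: K_def w0)
      finally show ?thesis .
    qed
  qed
qed



lemma cost_lemmas: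
  fixes w :: "real \<Rightarrow> real"
  assumes wp: "well_potential w" and a0: "0 < \<alpha>" and a1: "\<alpha> < 1/2"
  defines "I \<equiv> integral {\<alpha>..1-\<alpha>} (\<lambda>t. 2 * sqrt (w t))"
  shows "pfun w (1-\<alpha>) - pfun w \<alpha> = I"
    and "0 \<le> pfun w 1"
    and "\<And>x y. min x y \<le> \<alpha> \<Longrightarrow> 1-\<alpha> \<le> max x y \<Longrightarrow> I \<le> integral {min x y..max x y} (\<lambda>t. 2 * sqrt (w t))"
    and "\<And>x y. min x y \<le> \<alpha> \<Longrightarrow> 2-\<alpha> \<le> max x y \<Longrightarrow> 2*I \<le> integral {min x y..max x y} (\<lambda>t. 2 * sqrt (w t))"
    and "\<And>x y. min x y \<le> -1+\<alpha> \<Longrightarrow> 1-\<alpha> \<le> max x y \<Longrightarrow> 2*I \<le> integral {min x y..max x y} (\<lambda>t. 2 * sqrt (w t))"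
proof -
  define f where "f t = 2 * sqrt (w t)" for t
  have wc: "continuous_on UNIV w" and w0: "\<And>x. 0 \<le> w x" and wper: "\<And>x. w (x+1) = w x"
    using wp_basic[OF wp] by auto
  have fc: "continuous_on UNIV f" unfolding f_def by (intro continuous_intros wc)
  have f0: "0 \<le> f t" for t by (simp add: f_def w0)
  have fint: "f integrable_on {a..b}" for a b
    by (rule integrable_continuous_interval, rule continuous_on_subset[OF fc]) simp
  have mono: "integral {a'..b'} f \<le> integral {a..b} f" if "a \<le> a'" "b' \<le> b" for a b a' b'
    by (rule integral_subset_le) (use that in \<open>auto intro!: fint f0\<close>)
  have comb: "integral {a..c} f + integral {c..b} f = integral {a..b} f" if "a \<le> c" "c \<le> b" for a b c
    by (rule Henstock_Kurzweil_Integration.integral_combine[OF that fint])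
  have nn: "0 \<le> integral {a..b} f" for a b
    by (rule integral_nonneg[OF fint]) (rule f0)
  have shift: "integral {a+1..b+1} f = integral {a..b} f" for a b
  proof -
    have "integral {(a+1)-1..(b+1)-1} (\<lambda>x. f (x + 1)) = integral {a+1..b+1} f"
      by (rule integral_shift_real_ivl)
    moreover have "(\<lambda>x. f (x + 1)) = f" by (auto simp: f_def wper)
    ultimately show ?thesis by simp
  qed
  have I: "I = integral {\<alpha>..1-\<alpha>} f" unfolding I_def f_def ..
  show "pfun w (1-\<alpha>) - pfun w \<alpha> = I"
  proof -
    have "integral {0..\<alpha>} f + integral {\<alpha>..1-\<alpha>} f = integral {0..1-\<alpha>} f"
      by (rule comb) (use a0 a1 in auto)
    moreover have "2 * integral {0..z} (\<lambda>t. sqrt (w t)) = integral {0..z} f" for z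
      unfolding f_def by simp
    ultimately show ?thesis unfolding pfun_def I by (metis add_diff_cancel_left')
  qed
  show "0 \<le> pfun w 1"
  proof -
    have "0 \<le> integral {0..1} f" by (rule nn)
    then show ?thesis unfolding pfun_def f_def by simp
  qed
  show "I \<le> integral {min x y..max x y} (\<lambda>t. 2 * sqrt (w t))" if "min x y \<le> \<alpha>" "1-\<alpha> \<le> max x y" for x y
    unfolding I f_def[symmetric] by (rule mono) (use that in auto)
  show "2*I \<le> integral {min x y..max x y} (\<lambda>t. 2 * sqrt (w t))" if "min x y \<le> \<alpha>" "2-\<alpha> \<le> max x y" for x y
  proof -
    have "2*I = integral {\<alpha>..1-\<alpha>} f + integral {\<alpha>+1..1-\<alpha>+1} f" unfolding I shift by simp
    also have "\<dots> \<le> integral {\<alpha>..1-\<alpha>} f + integral {1-\<alpha>..2-\<alpha>} f"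
      using mono[of "1-\<alpha>" "\<alpha>+1" "1-\<alpha>+1" "2-\<alpha>"] a0 a1 by simp
    also have "\<dots> = integral {\<alpha>..2-\<alpha>} f" by (rule comb) (use a1 in auto)
    also have "\<dots> \<le> integral {min x y..max x y} f" by (rule mono) (use that in auto)
    finally show ?thesis unfolding f_def .
  qed
  show "2*I \<le> integral {min x y..max x y} (\<lambda>t. 2 * sqrt (w t))" if "min x y \<le> -1+\<alpha>" "1-\<alpha> \<le> max x y" for x y
  proof -
    have "2*I = integral {(-1+\<alpha>)+1..(-\<alpha>)+1} f + integral {\<alpha>..1-\<alpha>} f" unfolding I by simp
    also have "\<dots> = integral {-1+\<alpha>..-\<alpha>} f + integral {\<alpha>..1-\<alpha>} f" unfolding shift ..
    also have "\<dots> \<le> integral {-1+\<alpha>..\<alpha>} f + integral {\<alpha>..1-\<alpha>} f"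
      using mono[of "-1+\<alpha>" "-1+\<alpha>" "-\<alpha>" \<alpha>] a0 by simp
    also have "\<dots> = integral {-1+\<alpha>..1-\<alpha>} f" by (rule comb) (use a1 in auto)
    also have "\<dots> \<le> integral {min x y..max x y} f" by (rule mono) (use that in auto)
    finally show ?thesis unfolding f_def .
  qed
qed



lemma far_aux:
  fixes g :: "real \<Rightarrow> real"
  assumes gi: "integrable lborel (\<lambda>x. (g x)\<^sup>2)" and b0: "\<beta> > 0"
    and bnd: "\<And>x. x \<in> S \<Longrightarrow> \<beta> \<le> \<bar>g x\<bar>"
    and Sint: "\<And>L. L \<ge> 0 \<Longrightarrow> \<exists>a. {a..a+L} \<subseteq> S"
  shows False
proof -
  define F where "F = enn2real (\<integral>\<^sup>+x. ennreal ((g x)\<^sup>2) \<partial>lborel)"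
  have fin: "(\<integral>\<^sup>+x. ennreal ((g x)\<^sup>2) \<partial>lborel) \<noteq> \<infinity>" using integrableD(2)[OF gi] .
  then have FF: "(\<integral>\<^sup>+x. ennreal ((g x)\<^sup>2) \<partial>lborel) = ennreal F" unfolding F_def
    by (simp add: ennreal_enn2real_if less_top)
  have F0: "F \<ge> 0" unfolding F_def by simp
  define L where "L = (F + 1) / \<beta>\<^sup>2"
  have L0: "L \<ge> 0" unfolding L_def using F0 b0 by simp
  obtain a where aS: "{a..a+L} \<subseteq> S" using Sint[OF L0] by blast
  have "ennreal (\<beta>\<^sup>2) * ennreal L = (\<integral>\<^sup>+x. ennreal (\<beta>\<^sup>2) * indicator {a..a+L} x \<partial>lborel)"
    using L0 by (simp add: nn_integral_cmult_indicator)
  also have "\<dots> \<le> (\<integral>\<^sup>+x. ennreal ((g x)\<^sup>2) \<partial>lborel)"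
  proof (rule nn_integral_mono)
    fix x
    show "ennreal (\<beta>\<^sup>2) * indicator {a..a+L} x \<le> ennreal ((g x)\<^sup>2)"
    proof (cases "x \<in> {a..a+L}")
      case True
      then have "\<beta> \<le> \<bar>g x\<bar>" using aS bnd by blast
      then have "\<beta>\<^sup>2 \<le> \<bar>g x\<bar>\<^sup>2" using b0 by (intro power_mono) auto
      then show ?thesis using True by simp
    qed simp
  qed
  finally have "ennreal (\<beta>\<^sup>2 * L) \<le> ennreal F" unfolding FF using b0 L0 by (simp add: ennreal_mult)
  then have "\<beta>\<^sup>2 * L \<le> F" using F0 by simp
  moreover have "\<beta>\<^sup>2 * L = F + 1" unfolding L_def using b0 by simp
  ultimately show False by simp
qed

lemma far_left:
  fixes \<xi> v :: "real \<Rightarrow> real"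
  assumes gi: "integrable lborel (\<lambda>x. (\<xi> x - v x)\<^sup>2)" and lim: "(v \<longlongrightarrow> 0) at_bot" and a0: "\<alpha> > 0"
  shows "\<exists>l<M. \<xi> l < \<alpha>"
proof (rule ccontr)
  assume "\<not> (\<exists>l<M. \<xi> l < \<alpha>)"
  then have big: "\<And>l. l < M \<Longrightarrow> \<alpha> \<le> \<xi> l" by force
  have "eventually (\<lambda>x. v x < \<alpha>/2) at_bot" using order_tendstoD(2)[OF lim, of "\<alpha>/2"] a0 by simp
  then obtain N where N: "\<And>x. x \<le> N \<Longrightarrow> v x < \<alpha>/2" unfolding eventually_at_bot_linorder by blast
  define c where "c = min (M-1) N"
  show False
  proof (rule far_aux[OF gi, of "\<alpha>/2" "{..c}"])
    show "0 < \<alpha>/2" using a0 by simp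
    fix x assume "x \<in> {..c}"
    then have "\<alpha> \<le> \<xi> x" "v x < \<alpha>/2" using big N unfolding c_def by auto
    then show "\<alpha>/2 \<le> \<bar>\<xi> x - v x\<bar>" by (simp add: abs_if)
  next
    fix L :: real assume "L \<ge> 0"
    show "\<exists>a. {a..a+L} \<subseteq> {..c}" by (rule exI[of _ "c - L"]) auto
  qed
qed

lemma far_right:
  fixes \<xi> v :: "real \<Rightarrow> real"
  assumes gi: "integrable lborel (\<lambda>x. (\<xi> x - v x)\<^sup>2)" and lim: "(v \<longlongrightarrow> 1) at_top" and a0: "\<alpha> > 0"
  shows "\<exists>r>M. \<xi> r > 1 - \<alpha>"
proof (rule ccontr)
  assume "\<not> (\<exists>r>M. \<xi> r > 1 - \<alpha>)"
  then have big: "\<And>r. r > M \<Longrightarrow> \<xi> r \<le> 1 - \<alpha>" by force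
  have "eventually (\<lambda>x. v x > 1 - \<alpha>/2) at_top" using order_tendstoD(1)[OF lim, of "1 - \<alpha>/2"] a0 by simp
  then obtain N where N: "\<And>x. x \<ge> N \<Longrightarrow> v x > 1 - \<alpha>/2" unfolding eventually_at_top_linorder by blast
  define c where "c = max (M+1) N"
  show False
  proof (rule far_aux[OF gi, of "\<alpha>/2" "{c..}"])
    show "0 < \<alpha>/2" using a0 by simp
    fix x assume "x \<in> {c..}"
    then have "\<xi> x \<le> 1 - \<alpha>" "v x > 1 - \<alpha>/2" using big N unfolding c_def by auto
    then show "\<alpha>/2 \<le> \<bar>\<xi> x - v x\<bar>" by (simp add: abs_if)
  next
    fix L :: real assume "L \<ge> 0"
    show "\<exists>a. {a..a+L} \<subseteq> {c..}" by (rule exI[of _ c]) auto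
  qed
qed



lemma E_split:
  fixes h :: "real \<Rightarrow> real"
  assumes hm: "h \<in> borel_measurable borel" and h0: "\<And>x. 0 \<le> h x" and la: "l \<le> a" and ar: "a \<le> r"
  shows "(\<integral>\<^sup>+x. ennreal (indicator {l..a} x * h x) \<partial>lborel) + (\<integral>\<^sup>+x. ennreal (indicator {a..r} x * h x) \<partial>lborel)
     \<le> (\<integral>\<^sup>+x. ennreal (indicator {l..r} x * h x) \<partial>lborel)"
proof -
  have [measurable]: "h \<in> borel_measurable borel" by (rule hm)
  have "(\<integral>\<^sup>+x. ennreal (indicator {l..a} x * h x) \<partial>lborel) + (\<integral>\<^sup>+x. ennreal (indicator {a..r} x * h x) \<partial>lborel)
     = (\<integral>\<^sup>+x. ennreal (indicator {l..a} x * h x) + ennreal (indicator {a..r} x * h x) \<partial>lborel)"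
    by (rule nn_integral_add[symmetric]) auto
  also have "\<dots> \<le> (\<integral>\<^sup>+x. ennreal (indicator {l..r} x * h x) \<partial>lborel)"
  proof (rule nn_integral_mono_AE)
    have "AE x in lborel. x \<notin> {a}" by (rule AE_not_in[OF countable_imp_null_set_lborel]) simp
    then show "AE x in lborel. ennreal (indicator {l..a} x * h x) + ennreal (indicator {a..r} x * h x)
                 \<le> ennreal (indicator {l..r} x * h x)"
    proof (rule AE_mp, intro AE_I2 impI)
      fix x assume "x \<notin> {a}"
      then have "indicator {l..a} x * h x + indicator {a..r} x * h x = indicator {l..r} x * h x"
        using la ar by (auto simp: indicator_def)
      moreover have "ennreal (indicator {l..a} x * h x) + ennreal (indicator {a..r} x * h x)
          = ennreal (indicator {l..a} x * h x + indicator {a..r} x * h x)"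
        by (rule ennreal_plus[symmetric]) (auto simp: h0)
      ultimately show "ennreal (indicator {l..a} x * h x) + ennreal (indicator {a..r} x * h x)
                 \<le> ennreal (indicator {l..r} x * h x)" by simp
    qed
  qed
  finally show ?thesis .
qed

lemma E_le_total:
  fixes h :: "real \<Rightarrow> real"
  assumes h0: "\<And>x. 0 \<le> h x"
  shows "(\<integral>\<^sup>+x. ennreal (indicator A x * h x) \<partial>lborel) \<le> (\<integral>\<^sup>+x. ennreal (h x) \<partial>lborel)"
  by (rule nn_integral_mono) (auto simp: indicator_def h0)

lemma total_energy:
  fixes \<xi> w :: "real \<Rightarrow> real"
  assumes d: "\<delta> > 0"
    and aff: "\<forall>i::int. \<exists>a b. \<forall>x\<in>{(of_int i - 1) * \<delta> .. of_int i * \<delta>}. \<xi> x = a * x + b"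
    and xc: "continuous_on UNIV \<xi>"
    and wc: "continuous_on UNIV w" and w0: "\<And>x. 0 \<le> w x"
    and E: "(\<integral>\<^sup>+x. ennreal ((deriv \<xi> x)\<^sup>2) \<partial>lborel) + (\<integral>\<^sup>+x. ennreal (w (\<xi> x)) \<partial>lborel) \<le> ennreal C"
  shows "(\<integral>\<^sup>+x. ennreal ((slope \<xi> \<delta> x)\<^sup>2 + w (\<xi> x)) \<partial>lborel) \<le> ennreal C"
    and "(\<integral>\<^sup>+x. ennreal (w (\<xi> x)) \<partial>lborel) \<le> ennreal C"
proof -
  have xm[measurable]: "\<xi> \<in> borel_measurable borel" using xc borel_measurable_continuous_onI by blast
  have wm[measurable]: "w \<in> borel_measurable borel" using wc borel_measurable_continuous_onI by blast
  have sm[measurable]: "slope \<xi> \<delta> \<in> borel_measurable borel" by (rule slope_meas[OF xc])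
  have "AE x in lborel. x \<notin> range (\<lambda>i::int. of_int i * \<delta>)"
    by (rule AE_not_in[OF countable_imp_null_set_lborel]) simp
  then have "AE x in lborel. ennreal ((deriv \<xi> x)\<^sup>2) = ennreal ((slope \<xi> \<delta> x)\<^sup>2)"
  proof (rule AE_mp, intro AE_I2 impI)
    fix x assume "x \<notin> range (\<lambda>i::int. of_int i * \<delta>)"
    then have "deriv \<xi> x = slope \<xi> \<delta> x" by (intro DERIV_imp_deriv pa_deriv[OF d aff])
    then show "ennreal ((deriv \<xi> x)\<^sup>2) = ennreal ((slope \<xi> \<delta> x)\<^sup>2)" by simp
  qed
  then have eq1: "(\<integral>\<^sup>+x. ennreal ((deriv \<xi> x)\<^sup>2) \<partial>lborel) = (\<integral>\<^sup>+x. ennreal ((slope \<xi> \<delta> x)\<^sup>2) \<partial>lborel)"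
    by (rule nn_integral_cong_AE)
  have "(\<integral>\<^sup>+x. ennreal ((slope \<xi> \<delta> x)\<^sup>2 + w (\<xi> x)) \<partial>lborel)
      = (\<integral>\<^sup>+x. ennreal ((slope \<xi> \<delta> x)\<^sup>2) + ennreal (w (\<xi> x)) \<partial>lborel)"
    by (intro nn_integral_cong ennreal_plus) (auto simp: w0)
  also have "\<dots> = (\<integral>\<^sup>+x. ennreal ((slope \<xi> \<delta> x)\<^sup>2) \<partial>lborel) + (\<integral>\<^sup>+x. ennreal (w (\<xi> x)) \<partial>lborel)"
    by (rule nn_integral_add) auto
  finally show "(\<integral>\<^sup>+x. ennreal ((slope \<xi> \<delta> x)\<^sup>2 + w (\<xi> x)) \<partial>lborel) \<le> ennreal C"
    using E eq1 by simp
  show "(\<integral>\<^sup>+x. ennreal (w (\<xi> x)) \<partial>lborel) \<le> ennreal C"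
    by (rule order_trans[OF add_increasing[OF zero_le order_refl] E])
qed



lemma sq_tri: "((a::real) - b)\<^sup>2 \<le> 2 * (a - c)\<^sup>2 + 2 * (c - b)\<^sup>2"
proof -
  have "0 \<le> ((a - c) - (c - b))\<^sup>2" by simp
  then show ?thesis by (simp add: power2_eq_square algebra_simps)
qed

lemma sq_between: "(p::real) \<le> x \<Longrightarrow> x \<le> q \<Longrightarrow> x\<^sup>2 \<le> p\<^sup>2 + q\<^sup>2"
proof (cases "0 \<le> x")
  case True
  assume "p \<le> x" "x \<le> q"
  then have "x\<^sup>2 \<le> q\<^sup>2" using True by (intro power_mono) auto
  then show ?thesis by (smt (verit) zero_le_power2)
next
  case False
  assume "p \<le> x" "x \<le> q"
  then have "(-x)\<^sup>2 \<le> (-p)\<^sup>2" using False by (intro power_mono) auto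
  then show ?thesis by (smt (verit) power2_minus zero_le_power2)
qed

lemma ennreal3:
  fixes I C :: real and A B D T :: ennreal
  assumes "ennreal I \<le> A" "ennreal I \<le> B" "ennreal I \<le> D" "A + B + D \<le> T" "T \<le> ennreal C" "0 \<le> I" "0 \<le> C"
  shows "3 * I \<le> C"
proof -
  have "ennreal I + ennreal I + ennreal I \<le> A + B + D" using assms by (intro add_mono) auto
  then have "ennreal (3 * I) \<le> ennreal C" using assms(4,5) by (simp add: ennreal_plus[symmetric] assms(6))
  then show ?thesis using assms(7) by simp
qed



theorem lemma3p2:
  fixes w :: "real \<Rightarrow> real"
  assumes "well_potential w"
  shows "\<exists>\<alpha>0. 0 < \<alpha>0 \<and> \<alpha>0 \<le> 1/2 \<and>
    (\<forall>vbar \<alpha> C. profile vbar \<longrightarrow> 0 < \<alpha> \<longrightarrow> \<alpha> < \<alpha>0 \<longrightarrow>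
       pfun w 1 < C \<longrightarrow> C < 3/2 * (pfun w (1 - \<alpha>) - pfun w \<alpha>) \<longrightarrow>
       (\<exists>Cbar > 0. \<forall>\<delta> \<xi>. 0 < \<delta> \<longrightarrow> \<delta> \<le> 1 \<longrightarrow> \<xi> \<in> Adelta vbar \<delta> \<longrightarrow>
          Edelta w vbar \<delta> \<xi> \<le> ennreal C \<longrightarrow>
          (\<exists>k::int. (\<integral>\<^sup>+x. ennreal ((\<xi> (x + of_int k * \<delta>) - vbar x)\<^sup>2) \<partial>lborel)
                      \<le> ennreal (Cbar\<^sup>2))))"
proof -
  note wp = assms
  have wc: "continuous_on UNIV w" and w0: "\<And>x. 0 \<le> w x" and wper: "\<And>x. w (x + 1) = w x"
    using wp_basic[OF wp] by auto
  have wm[measurable]: "w \<in> borel_measurable borel" using wc borel_measurable_continuous_onI by blast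
  show ?thesis
  proof (rule exI[of _ "1/2"], intro conjI allI impI)
    fix vbar \<alpha> C
    assume pv: "profile vbar" and a0: "0 < \<alpha>" and a1: "\<alpha> < 1/2"
      and C1: "pfun w 1 < C" and C2: "C < 3/2 * (pfun w (1 - \<alpha>) - pfun w \<alpha>)"
    define f where "f t = 2 * sqrt (w t)" for t
    define I where "I = integral {\<alpha>..1-\<alpha>} (\<lambda>t. 2 * sqrt (w t))"
    note cl = cost_lemmas[OF wp a0 a1, folded I_def]
    have C0: "0 < C" using cl(2) C1 by linarith
    have C2': "C < 3/2 * I" using C2 cl(1) by simp
    have I0: "0 < I" using C0 C2' by linarith
    have I3: "C < 2 * I" using C2' I0 by linarith
    obtain K where K0: "K > 0" and Kb: "\<And>z. z \<in> {\<alpha>..2-\<alpha>} \<Longrightarrow> (z-1)\<^sup>2 \<le> K * w z"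
      using w_coercive[OF wp a0] a1 by auto
    have Kb2: "z\<^sup>2 \<le> K * w z" if "-1+\<alpha> \<le> z" "z \<le> 1-\<alpha>" for z
      using Kb[of "z+1"] that wper[of z] by auto
    obtain v' where vd: "\<And>x. (vbar has_real_derivative v' x) (at x)"
      using pv unfolding profile_def by blast
    have vc: "continuous_on UNIV vbar" using vd
      by (meson DERIV_isCont continuous_at_imp_continuous_on)
    have vm[measurable]: "vbar \<in> borel_measurable borel" using vc borel_measurable_continuous_onI by blast
    have vmono: "mono vbar" using pv unfolding profile_def by (auto intro: strict_mono_mono)
    have lim0: "(vbar \<longlongrightarrow> 0) at_bot" and lim1: "(vbar \<longlongrightarrow> 1) at_top"
      using pv unfolding profile_def by auto
    have si1: "integrable lborel (\<lambda>x. indicator {0..} x * (1 - vbar x)\<^sup>2)"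
      and si2: "integrable lborel (\<lambda>x. indicator {..0} x * (vbar x)\<^sup>2)"
      using pv unfolding profile_def set_integrable_def by auto
    define gfun where "gfun x = 2 * (indicator {0..} x * (1 - vbar x)\<^sup>2 + indicator {..0} x * (vbar x)\<^sup>2
       + indicator {0..1} x * ((vbar 0)\<^sup>2 + (vbar 1)\<^sup>2))" for x
    have gi: "integrable lborel gfun"
    proof -
      have "integrable lborel (\<lambda>x. indicator {0..1::real} x *\<^sub>R ((vbar 0)\<^sup>2 + (vbar 1)\<^sup>2))"
        by (rule integrable_indicator) auto
      then have "integrable lborel (\<lambda>x. indicator {0..1::real} x * ((vbar 0)\<^sup>2 + (vbar 1)\<^sup>2))" by simp
      then show ?thesis unfolding gfun_def using si1 si2
        by (intro integrable_mult_right Bochner_Integration.integrable_add)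
    qed
    define G0 where "G0 = (\<integral>\<^sup>+x. ennreal (gfun x) \<partial>lborel)"
    have G0fin: "G0 = ennreal (enn2real G0)"
      using integrableD(2)[OF gi] unfolding G0_def by (simp add: ennreal_enn2real_if less_top)
    define Cbar where "Cbar = sqrt (2 * K * C + enn2real G0 + 1)"
    have Cbsq: "Cbar\<^sup>2 = 2 * K * C + enn2real G0 + 1"
      unfolding Cbar_def using K0 C0 by (simp add: add_nonneg_nonneg)
    show "\<exists>Cbar > 0. \<forall>\<delta> \<xi>. 0 < \<delta> \<longrightarrow> \<delta> \<le> 1 \<longrightarrow> \<xi> \<in> Adelta vbar \<delta> \<longrightarrow>
          Edelta w vbar \<delta> \<xi> \<le> ennreal C \<longrightarrow>
          (\<exists>k::int. (\<integral>\<^sup>+x. ennreal ((\<xi> (x + of_int k * \<delta>) - vbar x)\<^sup>2) \<partial>lborel)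
                      \<le> ennreal (Cbar\<^sup>2))"
    proof (intro exI[of _ Cbar] conjI allI impI)
      show "0 < Cbar" unfolding Cbar_def using K0 C0 by (simp add: add_nonneg_pos)
      fix \<delta> \<xi>
      assume d0: "0 < \<delta>" and d1: "\<delta> \<le> 1" and xA: "\<xi> \<in> Adelta vbar \<delta>"
        and Ele: "Edelta w vbar \<delta> \<xi> \<le> ennreal C"
      have xc: "continuous_on UNIV \<xi>"
        and aff: "\<forall>i::int. \<exists>a b. \<forall>x\<in>{(of_int i - 1) * \<delta> .. of_int i * \<delta>}. \<xi> x = a * x + b"
        and H: "H1 (\<lambda>x. \<xi> x - vbar x)"
        using xA unfolding Adelta_def Aset_def by auto
      have xi2: "integrable lborel (\<lambda>x. (\<xi> x - vbar x)\<^sup>2)" using H unfolding H1_def by auto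
      have E: "(\<integral>\<^sup>+x. ennreal ((deriv \<xi> x)\<^sup>2) \<partial>lborel) + (\<integral>\<^sup>+x. ennreal (w (\<xi> x)) \<partial>lborel) \<le> ennreal C"
        using Ele xA unfolding Edelta_def by simp
      note TE = total_energy[OF d0 aff xc wc w0 E]
      have xm[measurable]: "\<xi> \<in> borel_measurable borel" using xc borel_measurable_continuous_onI by blast
      have sm[measurable]: "slope \<xi> \<delta> \<in> borel_measurable borel" by (rule slope_meas[OF xc])
      define h where "h x = (slope \<xi> \<delta> x)\<^sup>2 + w (\<xi> x)" for x
      have hm: "h \<in> borel_measurable borel" unfolding h_def by measurable
      have h0: "0 \<le> h x" for x unfolding h_def using w0[of "\<xi> x"] by simp
      define En where "En a b = (\<integral>\<^sup>+x. ennreal (indicator {a..b} x * h x) \<partial>lborel)" for a b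
      have Eb: "ennreal (integral {min (\<xi> a) (\<xi> b)..max (\<xi> a) (\<xi> b)} (\<lambda>t. 2 * sqrt (w t))) \<le> En a b"
        if "a \<le> b" for a b
        unfolding En_def h_def by (rule energy_interval[OF d0 aff xc wc w0 that])
      have EI: "ennreal c \<le> En a b"
        if "a \<le> b" "c \<le> integral {min (\<xi> a) (\<xi> b)..max (\<xi> a) (\<xi> b)} (\<lambda>t. 2 * sqrt (w t))" for a b c
        by (rule order_trans[OF ennreal_leI[OF that(2)] Eb[OF that(1)]])
      have Es: "En l a + En a r \<le> En l r" if "l \<le> a" "a \<le> r" for l a r
        unfolding En_def by (rule E_split[OF hm h0 that])
      have EC: "En a b \<le> ennreal C" for a b
      proof -
        have "En a b \<le> (\<integral>\<^sup>+x. ennreal (h x) \<partial>lborel)" unfolding En_def by (rule E_le_total[OF h0])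
        then show ?thesis using TE(1) unfolding h_def by simp
      qed
      have fl: "\<exists>l<M. \<xi> l < \<alpha>" for M by (rule far_left[OF xi2 lim0 a0])
      have fr: "\<exists>r>M. \<xi> r > 1 - \<alpha>" for M by (rule far_right[OF xi2 lim1 a0])
      have nocross: "\<alpha> < \<xi> b" if ab: "a < b" and xa: "1 - \<alpha> \<le> \<xi> a" for a b
      proof (rule ccontr)
        assume "\<not> \<alpha> < \<xi> b"
        then have xb: "\<xi> b \<le> \<alpha>" by simp
        obtain l where l: "l < a" "\<xi> l < \<alpha>" using fl by blast
        obtain r where r: "r > b" "\<xi> r > 1 - \<alpha>" using fr by blast
        have e1: "ennreal I \<le> En l a"
          by (rule EI, use l in simp, rule cl(3)) (use l xa a1 in auto)
        have e2: "ennreal I \<le> En a b"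
          by (rule EI, use ab in simp, rule cl(3)) (use ab xa xb a1 in auto)
        have e3: "ennreal I \<le> En b r"
          by (rule EI, use r in simp, rule cl(3)) (use r xb a1 in auto)
        have "En l a + En a b + En b r \<le> En l r"
          by (rule order_trans[OF add_right_mono[OF Es] Es]) (use l ab r in auto)
        then have "3 * I \<le> C" by (rule ennreal3[OF e1 e2 e3 _ EC]) (use I0 C0 in auto)
        then show False using I3 I0 by linarith
      qed
      have upper: "\<xi> y \<le> 2 - \<alpha>" for y
      proof (rule ccontr)
        assume "\<not> \<xi> y \<le> 2 - \<alpha>"
        then have xy: "2 - \<alpha> < \<xi> y" by simp
        obtain l where l: "l < y" "\<xi> l < \<alpha>" using fl by blast
        have "ennreal (2 * I) \<le> En l y"
          by (rule EI, use l in simp, rule cl(4)) (use l xy a1 in auto)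
        then have "ennreal (2 * I) \<le> ennreal C" using EC order_trans by blast
        then have "2 * I \<le> C" using C0 by simp
        then show False using I3 by linarith
      qed
      have lower: "-1 + \<alpha> \<le> \<xi> y" for y
      proof (rule ccontr)
        assume "\<not> -1 + \<alpha> \<le> \<xi> y"
        then have xy: "\<xi> y < -1 + \<alpha>" by simp
        obtain r where r: "r > y" "\<xi> r > 1 - \<alpha>" using fr by blast
        have "ennreal (2 * I) \<le> En y r"
          by (rule EI, use r in simp, rule cl(5)) (use r xy a1 in auto)
        then have "ennreal (2 * I) \<le> ennreal C" using EC order_trans by blast
        then have "2 * I \<le> C" using C0 by simp
        then show False using I3 by linarith
      qed
      define S where "S = {y. 1 - \<alpha> \<le> \<xi> y}"
      obtain r0 where r0: "\<xi> r0 > 1 - \<alpha>" using fr by blast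
      obtain l0 where l0: "\<xi> l0 < \<alpha>" using fl by blast
      have Sne: "S \<noteq> {}" using r0 unfolding S_def by (auto intro!: exI[of _ r0])
      have Sbdd: "bdd_below S"
      proof (rule bdd_belowI[of _ l0])
        fix y assume "y \<in> S"
        then have "1 - \<alpha> \<le> \<xi> y" unfolding S_def by simp
        show "l0 \<le> y"
        proof (rule ccontr)
          assume "\<not> l0 \<le> y"
          then have "\<alpha> < \<xi> l0" using nocross[of y l0] \<open>1 - \<alpha> \<le> \<xi> y\<close> by simp
          then show False using l0 by simp
        qed
      qed
      have Scl: "closed S"
      proof -
        have "S = \<xi> -` {1 - \<alpha>..}" unfolding S_def by auto
        moreover have "closed (\<xi> -` {1 - \<alpha>..})"
          by (rule continuous_closed_vimage) (use xc in \<open>auto simp: continuous_on_eq_continuous_at\<close>)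
        ultimately show ?thesis by simp
      qed
      define x0 where "x0 = Inf S"
      have x0S: "x0 \<in> S" unfolding x0_def by (rule closed_contains_Inf[OF Sne Sbdd Scl])
      have right: "\<alpha> \<le> \<xi> y \<and> \<xi> y \<le> 2 - \<alpha>" if "x0 \<le> y" for y
      proof (cases "y = x0")
        case True then show ?thesis using x0S a1 upper unfolding S_def by auto
      next
        case False
        then have "x0 < y" using that by simp
        then obtain s where "s \<in> S" "s < y" unfolding x0_def using cInf_less_iff[OF Sne Sbdd] by blast
        then have "\<alpha> < \<xi> y" using nocross unfolding S_def by auto
        then show ?thesis using upper by auto
      qed
      have left: "-1 + \<alpha> \<le> \<xi> y \<and> \<xi> y \<le> 1 - \<alpha>" if "y < x0" for y
      proof -
        have "y \<notin> S" using cInf_lower[OF _ Sbdd, of y] that unfolding x0_def by auto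
        then show ?thesis using lower unfolding S_def by auto
      qed
      define k where "k = \<lfloor>x0 / \<delta>\<rfloor>"
      define s where "s = of_int k * \<delta>"
      have "of_int k \<le> x0 / \<delta>" "x0 / \<delta> < of_int k + 1" unfolding k_def by linarith+
      then have sx0: "s \<le> x0" "x0 < s + \<delta>" unfolding s_def using d0 by (auto simp: field_simps)
      have pw: "(\<xi> (x + s) - vbar x)\<^sup>2 \<le> 2 * K * w (\<xi> (x + s)) + gfun x" for x
      proof (cases "x0 \<le> x + s")
        case True
        then have "\<xi> (x+s) \<in> {\<alpha>..2-\<alpha>}" using right by auto
        then have k1: "(\<xi> (x+s) - 1)\<^sup>2 \<le> K * w (\<xi> (x+s))" by (rule Kb)
        have x0': "0 \<le> x" using True sx0 by linarith
        have "gfun x \<ge> 2 * (1 - vbar x)\<^sup>2"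
          unfolding gfun_def using x0' by (auto simp: indicator_def)
        then show ?thesis using sq_tri[of "\<xi> (x+s)" "vbar x" 1] k1 by linarith
      next
        case False
        then have "\<xi> (x+s) \<in> {-1+\<alpha>..1-\<alpha>}" using left by auto
        then have k2: "(\<xi> (x+s))\<^sup>2 \<le> K * w (\<xi> (x+s))" using Kb2 by auto
        have x1: "x < 1" using False sx0 d1 by linarith
        have "gfun x \<ge> 2 * (vbar x)\<^sup>2"
        proof (cases "x \<le> 0")
          case True then show ?thesis unfolding gfun_def by (auto simp: indicator_def)
        next
          case False
          then have "vbar 0 \<le> vbar x" "vbar x \<le> vbar 1" using x1 vmono by (auto simp: mono_def)
          then have "(vbar x)\<^sup>2 \<le> (vbar 0)\<^sup>2 + (vbar 1)\<^sup>2" by (rule sq_between)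
          moreover have "0 \<le> (1 - vbar x)\<^sup>2" by simp
          moreover have "gfun x = 2 * ((1 - vbar x)\<^sup>2 + ((vbar 0)\<^sup>2 + (vbar 1)\<^sup>2))"
            unfolding gfun_def using False x1 by (simp add: indicator_def)
          ultimately show ?thesis by (smt (verit))
        qed
        moreover have "(\<xi> (x+s) - vbar x)\<^sup>2 \<le> 2 * (\<xi> (x+s))\<^sup>2 + 2 * (vbar x)\<^sup>2"
          using sq_tri[of "\<xi> (x+s)" "vbar x" 0] by simp
        ultimately show ?thesis using k2 by linarith
      qed
      have shiftw: "(\<integral>\<^sup>+x. ennreal (w (\<xi> (x + s))) \<partial>lborel) = (\<integral>\<^sup>+x. ennreal (w (\<xi> x)) \<partial>lborel)"
        using nn_integral_real_affine[of "\<lambda>x. ennreal (w (\<xi> x))" 1 s] by (simp add: add.commute)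
      show "\<exists>k::int. (\<integral>\<^sup>+x. ennreal ((\<xi> (x + of_int k * \<delta>) - vbar x)\<^sup>2) \<partial>lborel) \<le> ennreal (Cbar\<^sup>2)"
      proof (intro exI[of _ k])
        have "(\<integral>\<^sup>+x. ennreal ((\<xi> (x + of_int k * \<delta>) - vbar x)\<^sup>2) \<partial>lborel)
            \<le> (\<integral>\<^sup>+x. ennreal (2 * K) * ennreal (w (\<xi> (x + s))) + ennreal (gfun x) \<partial>lborel)"
        proof (rule nn_integral_mono)
          fix x
          have "ennreal ((\<xi> (x + s) - vbar x)\<^sup>2) \<le> ennreal (2 * K * w (\<xi> (x + s)) + gfun x)"
            using pw[of x] by (rule ennreal_leI)
          also have "\<dots> = ennreal (2 * K) * ennreal (w (\<xi> (x + s))) + ennreal (gfun x)"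
            using K0 w0 gi by (simp add: ennreal_plus ennreal_mult gfun_def)
          finally show "ennreal ((\<xi> (x + of_int k * \<delta>) - vbar x)\<^sup>2) \<le> ennreal (2 * K) * ennreal (w (\<xi> (x + s))) + ennreal (gfun x)"
            unfolding s_def .
        qed
        also have "\<dots> = ennreal (2 * K) * (\<integral>\<^sup>+x. ennreal (w (\<xi> (x + s))) \<partial>lborel) + G0"
          unfolding G0_def by (subst nn_integral_add) (auto simp: nn_integral_cmult gfun_def)
        also have "\<dots> \<le> ennreal (2 * K) * ennreal C + ennreal (enn2real G0)"
          unfolding shiftw using TE(2) G0fin by (intro add_mono mult_left_mono) auto
        also have "\<dots> = ennreal (2 * K * C + enn2real G0)"
          using K0 C0 by (simp add: ennreal_plus ennreal_mult)
        also have "\<dots> \<le> ennreal (Cbar\<^sup>2)" unfolding Cbsq by (rule ennreal_leI) simp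
        finally show "(\<integral>\<^sup>+x. ennreal ((\<xi> (x + of_int k * \<delta>) - vbar x)\<^sup>2) \<partial>lborel) \<le> ennreal (Cbar\<^sup>2)" .
      qed
    qed
  qed simp_all
qed


end
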